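(* Let $k\ge2$ and $-\frac{\pi}{2}\le\theta_1<\theta_2<\dots<\theta_k\le\frac{\pi}{2}$, $\theta_{\min}=\min_{p\ne j}|\theta_p-\theta_j|$, and $V_k(k-1)=(\phi_{k-1}(e^{i\theta_1}),\dots,\phi_{k-1}(e^{i\theta_k}))$. Then $$\|V_k(k-1)^{-1}\|_\infty\le\frac{\pi^{k-1}}{\zeta(k)\,\theta_{\min}^{k-1}}.$$
   Context: $\phi_s(z)=(1,z,\dots,z^s)^T$. For an integer $k\ge1$, $\zeta(k)=\big((\tfrac{k-1}{2})!\big)^2$ if $k$ is odd and $\zeta(k)=(\tfrac{k}{2})!(\tfrac{k-2}{2})!$ if $k$ is even. $\|\cdot\|_\infty$ is the matrix norm induced by the vector $\ell^\infty$ norm (maximum absolute row sum). *)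

theory Defs
  imports "HOL-Analysis.Analysis" "Jordan_Normal_Form.Matrix"
begin

definition zeta_fact :: "nat \<Rightarrow> nat" where
  "zeta_fact k = (if odd k then (fact ((k - 1) div 2))^2
                  else fact (k div 2) * fact ((k - 2) div 2))"

text \<open>V_k(k-1) = (phi_{k-1}(e^{i theta_1}), ..., phi_{k-1}(e^{i theta_k})): a k x k matrix
  whose j-th column is (1, z_j, ..., z_j^(k-1)) with z_j = e^{i theta_j}.
  Nodes are indexed 0..k-1.\<close>
definition vandermonde_circ :: "nat \<Rightarrow> (nat \<Rightarrow> real) \<Rightarrow> complex mat" where
  "vandermonde_circ k \<theta> = mat k k (\<lambda>(r, j). (exp (\<i> * complex_of_real (\<theta> j))) ^ r)"

text \<open>Matrix norm induced by the l-infinity vector norm: maximum absolute row sum.\<close>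
definition mat_inf_norm :: "complex mat \<Rightarrow> real" where
  "mat_inf_norm A = Max {(\<Sum>j<dim_col A. cmod (A $$ (i, j))) | i. i < dim_row A}"

definition theta_min :: "nat \<Rightarrow> (nat \<Rightarrow> real) \<Rightarrow> real" where
  "theta_min k \<theta> = Min {\<bar>\<theta> p - \<theta> j\<bar> | p j. p < k \<and> j < k \<and> p \<noteq> j}"

end

theory Submission
  imports Defs "Jordan_Normal_Form.Determinant" "HOL-Computational_Algebra.Polynomial"
begin

lemma jordan_sin:
  fixes x :: real
  assumes "0 \<le> x" "x \<le> pi / 2"
  shows "2 * x / pi \<le> sin x"
proof -
  have cv: "convex_on {0..pi} (\<lambda>x. - sin x)"
  proof (rule convex_on_realI[where f' = "\<lambda>x. - cos x"])
    show "connected {0..pi}" by simp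
    show "((\<lambda>x. - sin x) has_real_derivative - cos x) (at x)" for x
      by (auto intro!: derivative_eq_intros)
    show "- cos x \<le> - cos y" if "x \<in> {0..pi}" "y \<in> {0..pi}" "x \<le> y" for x y
      using that cos_monotone_0_pi_le by auto
  qed
  define t where "t = 2 * x / pi"
  have t: "0 \<le> t" "t \<le> 1" using assms pi_gt_zero by (auto simp: t_def field_simps)
  have "- sin ((1 - t) *\<^sub>R 0 + t *\<^sub>R (pi/2)) \<le> (1 - t) * (- sin 0) + t * (- sin (pi/2))"
    using convex_onD[OF cv, of t 0 "pi/2"] t pi_gt_zero by auto
  moreover have "(1 - t) *\<^sub>R 0 + t *\<^sub>R (pi/2) = x" using pi_gt_zero by (simp add: t_def)
  ultimately show ?thesis by (simp add: t_def)
qed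

lemma chord_bound:
  fixes a b :: real
  assumes "\<bar>a - b\<bar> \<le> pi"
  shows "2 * \<bar>a - b\<bar> / pi \<le> cmod (exp (\<i> * of_real a) - exp (\<i> * of_real b))"
proof -
  have e: "exp (\<i> * of_real a) = exp (\<i> * of_real b) * exp (\<i> * of_real (a - b))"
    by (simp add: exp_add[symmetric] algebra_simps)
  have "cmod (exp (\<i> * of_real a) - exp (\<i> * of_real b))
        = cmod (exp (\<i> * of_real b) * (exp (\<i> * of_real (a - b)) - 1))"
    by (simp add: e algebra_simps)
  also have "\<dots> = 2 * \<bar>sin ((a - b) / 2)\<bar>"
    by (simp only: norm_mult norm_exp_i_times dist_exp_i_1)
  also have "\<bar>sin ((a - b) / 2)\<bar> = sin (\<bar>a - b\<bar> / 2)"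
  proof (cases "a - b \<ge> 0")
    case True
    have "0 \<le> sin ((a - b) / 2)" by (rule sin_ge_zero) (use assms True in auto)
    then show ?thesis using True by simp
  next
    case False
    have "0 \<le> sin ((b - a) / 2)" by (rule sin_ge_zero) (use assms False in auto)
    moreover have "sin ((a - b) / 2) = - sin ((b - a) / 2)"
      by (metis minus_diff_eq minus_divide_left sin_minus)
    moreover have "\<bar>a - b\<bar> = b - a" using False by simp
    ultimately show ?thesis by simp
  qed
  finally have eq: "cmod (exp (\<i> * of_real a) - exp (\<i> * of_real b)) = 2 * sin (\<bar>a - b\<bar> / 2)" .
  have "2 * (\<bar>a - b\<bar> / 2) / pi \<le> sin (\<bar>a - b\<bar> / 2)"
    using assms by (intro jordan_sin) auto
  then show ?thesis unfolding eq by (simp add: field_simps)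
qed

definition l1 :: "nat \<Rightarrow> complex poly \<Rightarrow> real" where
  "l1 n p = (\<Sum>i<n. cmod (coeff p i))"

lemma l1_mono: "l1 n p \<le> l1 (Suc n) p"
  by (simp add: l1_def)

lemma l1_pCons0: "l1 n (pCons 0 q) \<le> l1 n q"
proof (cases n)
  case 0 then show ?thesis by (simp add: l1_def)
next
  case (Suc m)
  have "l1 n (pCons 0 q) = l1 m q"
    unfolding l1_def Suc sum.lessThan_Suc_shift by simp
  then show ?thesis using l1_mono[of m q] Suc by simp
qed

lemma l1_add: "l1 n (p + q) \<le> l1 n p + l1 n q"
  unfolding l1_def sum.distrib[symmetric] by (intro sum_mono) (simp add: norm_triangle_ineq)

lemma l1_smult: "l1 n (Polynomial.smult a p) = cmod a * l1 n p"
  unfolding l1_def by (simp add: norm_mult sum_distrib_left)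

lemma l1_lin: "l1 n ([:- a, 1:] * q) \<le> (1 + cmod a) * l1 n q"
proof -
  have "[:- a, 1:] * q = pCons 0 q + Polynomial.smult (- a) q"
    by (simp add: algebra_simps)
  then have "l1 n ([:- a, 1:] * q) \<le> l1 n (pCons 0 q) + l1 n (Polynomial.smult (- a) q)"
    using l1_add by metis
  also have "l1 n (Polynomial.smult (- a) q) = cmod a * l1 n q"
    by (simp only: l1_smult norm_minus_cancel)
  also have "l1 n (pCons 0 q) + cmod a * l1 n q \<le> l1 n q + cmod a * l1 n q"
    using l1_pCons0[of n q] by simp
  finally show ?thesis by (simp add: algebra_simps)
qed

lemma l1_nonneg: "0 \<le> l1 n p" by (simp add: l1_def sum_nonneg)

lemma l1_prod_lin:
  assumes "finite S"
  shows "l1 n (\<Prod>l\<in>S. [:- a l, 1:]) \<le> (\<Prod>l\<in>S. (1 + cmod (a l)))"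
  using assms
proof (induction S rule: finite_induct)
  case empty
  have "l1 m 1 = (if m = 0 then 0 else 1)" for m
    by (induction m) (auto simp: l1_def)
  then have "l1 n 1 \<le> 1" by simp
  then show ?case by simp
next
  case (insert x F)
  have "l1 n (\<Prod>l\<in>insert x F. [:- a l, 1:]) = l1 n ([:- a x, 1:] * (\<Prod>l\<in>F. [:- a l, 1:]))"
    using insert by simp
  also have "\<dots> \<le> (1 + cmod (a x)) * l1 n (\<Prod>l\<in>F. [:- a l, 1:])" by (rule l1_lin)
  also have "\<dots> \<le> (1 + cmod (a x)) * (\<Prod>l\<in>F. (1 + cmod (a l)))"
    using insert by (intro mult_left_mono) auto
  finally show ?case using insert by simp
qed

lemma fact_balance_aux:
  "a - b + (b - a) = d \<Longrightarrow> a + b = n \<Longrightarrow> fact (n div 2) * fact (n - n div 2) \<le> (fact a * fact b :: nat)"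
proof (induction d arbitrary: a b rule: less_induct)
  case (less d)
  show ?case
  proof (cases "a \<le> b + 1 \<and> b \<le> a + 1")
    case True
    then have "(a = n div 2 \<and> b = n - n div 2) \<or> (b = n div 2 \<and> a = n - n div 2)"
      using less.prems by auto
    then show ?thesis by (auto simp: mult.commute)
  next
    case False
    then have "a \<ge> b + 2 \<or> b \<ge> a + 2" by auto
    then show ?thesis
    proof
      assume ab: "a \<ge> b + 2"
      have "fact (n div 2) * fact (n - n div 2) \<le> (fact (a - 1) * fact (b + 1) :: nat)"
      proof -
        have h: "(a - 1) - (b + 1) + ((b + 1) - (a - 1)) < d" using ab less.prems by auto
        show ?thesis by (rule less.IH[OF h refl]) (use ab less.prems in auto)
      qed
      also have "fact (a - 1) * fact (b + 1) = fact (a - 1) * ((b + 1) * fact b)"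
        by (simp add: fact_Suc)
      also have "\<dots> \<le> fact (a - 1) * (a * fact b)" using ab by (intro mult_mono) auto
      also have "fact (a - 1) * (a * fact b) = fact a * fact b"
        using ab fact_Suc[of "a - 1"] by (cases a) (auto simp: algebra_simps)
      finally show ?thesis .
    next
      assume ab: "b \<ge> a + 2"
      have "fact (n div 2) * fact (n - n div 2) \<le> (fact (a + 1) * fact (b - 1) :: nat)"
      proof -
        have h: "(a + 1) - (b - 1) + ((b - 1) - (a + 1)) < d" using ab less.prems by auto
        show ?thesis by (rule less.IH[OF h refl]) (use ab less.prems in auto)
      qed
      also have "fact (a + 1) * fact (b - 1) = ((a + 1) * fact a) * fact (b - 1)"
        by (simp add: fact_Suc)
      also have "\<dots> \<le> (b * fact a) * fact (b - 1)" using ab by (intro mult_mono) auto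
      also have "(b * fact a) * fact (b - 1) = fact a * fact b"
        using ab fact_Suc[of "b - 1"] by (cases b) (auto simp: algebra_simps)
      finally show ?thesis .
    qed
  qed
qed

lemma fact_balance:
  "a + b = n \<Longrightarrow> fact (n div 2) * fact (n - n div 2) \<le> (fact a * fact b :: nat)"
  using fact_balance_aux by blast

lemma zeta_fact_eq:
  assumes "k \<ge> 2"
  shows "zeta_fact k = fact ((k - 1) div 2) * fact ((k - 1) - (k - 1) div 2)"
proof (cases "odd k")
  case True
  then obtain m where m: "k = 2 * m + 1" by (meson oddE)
  then show ?thesis by (simp add: zeta_fact_def power2_eq_square)
next
  case False
  then obtain m where m: "k = 2 * m" by (meson evenE)
  with assms obtain r where r: "m = Suc r" by (cases m) auto
  have a: "(k - 1) div 2 = r" "(k - 2) div 2 = r" "k div 2 = Suc r" using m r by auto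
  have "(k - 1) - (k - 1) div 2 = Suc r" using m r by auto
  then show ?thesis using False a by (simp add: zeta_fact_def mult.commute)
qed

lemma prod_down: "(\<Prod>l<i. (i - l)) = (fact i :: nat)"
proof (induction i)
  case 0 then show ?case by simp
next
  case (Suc i)
  have "(\<Prod>l<Suc i. (Suc i - l)) = Suc i * (\<Prod>l<i. (Suc i - Suc l))"
    using prod.lessThan_Suc_shift[of "\<lambda>l. Suc i - l" i] by simp
  also have "\<dots> = Suc i * fact i" using Suc by simp
  finally show ?case by (simp add: fact_Suc)
qed

lemma prod_up: "(\<Prod>l\<in>{i<..<k}. (l - i)) = (fact (k - 1 - i) :: nat)"
proof (induction k)
  case 0 then show ?case by simp
next
  case (Suc k)
  show ?case
  proof (cases "k \<le> i")
    case True
    then have "{i<..<Suc k} = {}" by auto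
    then show ?thesis using True by simp
  next
    case False
    then have "{i<..<Suc k} = insert k {i<..<k}" by auto
    then have "(\<Prod>l\<in>{i<..<Suc k}. (l - i)) = (k - i) * fact (k - 1 - i)"
      using Suc by simp
    also have "\<dots> = fact (k - i)"
    proof -
      obtain m where m: "k - i = Suc m" using False by (metis Suc_diff_Suc not_le)
      then have "k - 1 - i = m" by simp
      then show ?thesis using m by (simp add: fact_Suc)
    qed
    finally show ?thesis by simp
  qed
qed

lemma poly_sum_k:
  fixes p :: "complex poly"
  assumes "degree p < k"
  shows "poly p x = (\<Sum>r<k. coeff p r * x ^ r)"
proof -
  have "poly p x = (\<Sum>r\<le>degree p. coeff p r * x ^ r)" by (rule poly_altdef)
  also have "\<dots> = (\<Sum>r<k. coeff p r * x ^ r)"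
    by (rule sum.mono_neutral_left) (use assms in \<open>auto simp: coeff_eq_0\<close>)
  finally show ?thesis .
qed

theorem lemma3p3:
  fixes k :: nat and \<theta> :: "nat \<Rightarrow> real"
  assumes "k \<ge> 2"
    and "\<And>j. j < k \<Longrightarrow> - (pi / 2) \<le> \<theta> j \<and> \<theta> j \<le> pi / 2"
    and "\<And>p j. p < j \<Longrightarrow> j < k \<Longrightarrow> \<theta> p < \<theta> j"
  shows "invertible_mat (vandermonde_circ k \<theta>) \<and>
         (\<forall>W \<in> carrier_mat k k. W * vandermonde_circ k \<theta> = 1\<^sub>m k \<longrightarrow>
            mat_inf_norm W \<le> pi ^ (k - 1) / (real (zeta_fact k) * theta_min k \<theta> ^ (k - 1)))"
proof -
  define z where "z j = exp (\<i> * complex_of_real (\<theta> j))" for j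
  define S where "S j = {..<k} - {j}" for j
  define tm where "tm = theta_min k \<theta>"
  define dd where "dd i l = (if l \<le> i then i - l else l - i)" for i l :: nat
  define V where "V = vandermonde_circ k \<theta>"
  have finS: "finite (S j)" for j by (simp add: S_def)
  have cardS: "card (S j) = k - 1" if "j < k" for j using that by (simp add: S_def)
  have th_bd: "\<bar>\<theta> p - \<theta> j\<bar> \<le> pi" if "p < k" "j < k" for p j
    using assms(2)[OF that(1)] assms(2)[OF that(2)] by (auto simp: abs_if)
  define TS where "TS = {\<bar>\<theta> p - \<theta> j\<bar> | p j. p < k \<and> j < k \<and> p \<noteq> j}"
  have finTS: "finite TS"
  proof -
    have "TS \<subseteq> (\<lambda>(p, j). \<bar>\<theta> p - \<theta> j\<bar>) ` ({..<k} \<times> {..<k})"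
      by (auto simp: TS_def)
    then show ?thesis by (rule finite_subset) auto
  qed
  have "\<bar>\<theta> 0 - \<theta> 1\<bar> \<in> TS" unfolding TS_def using assms(1) by force
  then have neTS: "TS \<noteq> {}" by auto
  have th_ne: "\<theta> p \<noteq> \<theta> j" if "p < k" "j < k" "p \<noteq> j" for p j
  proof (cases "p < j")
    case True then show ?thesis using assms(3)[OF True that(2)] by simp
  next
    case False then have "j < p" using that by simp
    then show ?thesis using assms(3)[OF \<open>j < p\<close> that(1)] by simp
  qed
  have tm_pos: "0 < tm"
    unfolding tm_def theta_min_def
    using finTS neTS th_ne unfolding TS_def[symmetric]
    by (subst Min_gr_iff) (auto simp: TS_def)
  have tm_le: "tm \<le> \<bar>\<theta> p - \<theta> j\<bar>" if "p < k" "j < k" "p \<noteq> j" for p j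
    unfolding tm_def theta_min_def TS_def[symmetric]
    by (rule Min_le[OF finTS]) (use that in \<open>auto simp: TS_def\<close>)
  have gap: "real (l - i) * tm \<le> \<theta> l - \<theta> i" if "i \<le> l" "l < k" for i l
    using that
  proof (induction l)
    case 0 then show ?case by simp
  next
    case (Suc l)
    show ?case
    proof (cases "i = Suc l")
      case True then show ?thesis by simp
    next
      case False
      then have il: "i \<le> l" using Suc by simp
      have IH: "real (l - i) * tm \<le> \<theta> l - \<theta> i" using Suc il by simp
      have "tm \<le> \<bar>\<theta> (Suc l) - \<theta> l\<bar>" using tm_le[of "Suc l" l] Suc by simp
      moreover have "\<theta> l < \<theta> (Suc l)" using assms(3)[of l "Suc l"] Suc by simp
      ultimately have "tm \<le> \<theta> (Suc l) - \<theta> l" by simp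
      moreover have "real (Suc l - i) = real (l - i) + 1" using il by simp
      ultimately show ?thesis using IH by (simp add: algebra_simps)
    qed
  qed
  have sep: "real (dd i l) * tm \<le> \<bar>\<theta> i - \<theta> l\<bar>" if "i < k" "l < k" for i l
  proof (cases "l \<le> i")
    case True
    then have "real (dd i l) * tm \<le> \<theta> i - \<theta> l" using gap[of l i] that by (simp add: dd_def)
    also have "\<dots> \<le> \<bar>\<theta> i - \<theta> l\<bar>" by simp
    finally show ?thesis .
  next
    case False
    then have "real (dd i l) * tm \<le> \<theta> l - \<theta> i" using gap[of i l] that by (simp add: dd_def)
    also have "\<dots> \<le> \<bar>\<theta> i - \<theta> l\<bar>" by simp
    finally show ?thesis .
  qed
  have dd_pos: "0 < dd i l" if "i \<noteq> l" for i l using that by (auto simp: dd_def)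
  have chord: "2 * (real (dd i l) * tm) / pi \<le> cmod (z i - z l)" if "i < k" "l < k" for i l
  proof -
    have "2 * \<bar>\<theta> i - \<theta> l\<bar> / pi \<le> cmod (z i - z l)"
      unfolding z_def by (rule chord_bound) (rule th_bd[OF that])
    moreover have "2 * (real (dd i l) * tm) / pi \<le> 2 * \<bar>\<theta> i - \<theta> l\<bar> / pi"
      using sep[OF that] by (intro divide_right_mono) auto
    ultimately show ?thesis by linarith
  qed
  have zdist: "0 < cmod (z i - z l)" if "i < k" "l < k" "i \<noteq> l" for i l
  proof -
    have "0 < 2 * (real (dd i l) * tm) / pi" using dd_pos[OF that(3)] tm_pos by simp
    then show ?thesis using chord[OF that(1,2)] by linarith
  qed
  have zabs: "cmod (z l) = 1" for l by (simp add: z_def)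
  define D where "D j = (\<Prod>l\<in>S j. (z j - z l))" for j
  define P where "P j = (\<Prod>l\<in>S j. [:- z l, 1:])" for j
  define L where "L j = Polynomial.smult (inverse (D j)) (P j)" for j
  have D_ne: "D j \<noteq> 0" if "j < k" for j
    unfolding D_def using finS zdist that by (auto simp: S_def)
  have polyP: "poly (P j) x = (\<Prod>l\<in>S j. (x - z l))" for j x
    unfolding P_def poly_prod by simp
  have polyL: "poly (L j) (z m) = (if m = j then 1 else 0)" if "j < k" "m < k" for j m
  proof (cases "m = j")
    case True
    then show ?thesis using D_ne[OF that(1)] by (simp add: L_def polyP D_def)
  next
    case False
    then have "m \<in> S j" using that by (simp add: S_def)
    then have "poly (P j) (z m) = 0" unfolding polyP using finS by (auto simp: prod_zero_iff)
    then show ?thesis using False by (simp add: L_def)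
  qed
  have degL: "degree (L j) < k" if "j < k" for j
  proof -
    have "degree (L j) \<le> degree (P j)" unfolding L_def by (rule degree_smult_le)
    also have "\<dots> \<le> sum (degree \<circ> (\<lambda>l. [:- z l, 1:])) (S j)"
      unfolding P_def by (rule degree_prod_sum_le[OF finS])
    also have "\<dots> = card (S j)" by simp
    also have "\<dots> = k - 1" using cardS[OF that] .
    finally show ?thesis using assms(1) by simp
  qed
  define W0 where "W0 = mat k k (\<lambda>(j, r). coeff (L j) r)"
  have W0c: "W0 \<in> carrier_mat k k" by (simp add: W0_def)
  have Vc: "V \<in> carrier_mat k k" by (simp add: V_def vandermonde_circ_def)
  have WV: "W0 * V = 1\<^sub>m k"
  proof (rule eq_matI)
    fix j m assume jm: "j < dim_row (1\<^sub>m k :: complex mat)" "m < dim_col (1\<^sub>m k :: complex mat)"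
    then have j: "j < k" and m: "m < k" by auto
    have "(W0 * V) $$ (j, m) = (\<Sum>r\<in>{0..<k}. coeff (L j) r * z m ^ r)"
      using j m by (simp add: W0_def V_def vandermonde_circ_def scalar_prod_def z_def)
    also have "\<dots> = poly (L j) (z m)"
      using poly_sum_k[OF degL[OF j]] by (simp add: atLeast0LessThan)
    also have "\<dots> = 1\<^sub>m k $$ (j, m)" using polyL[OF j m] j m by auto
    finally show "(W0 * V) $$ (j, m) = 1\<^sub>m k $$ (j, m)" .
  qed (use W0c Vc in auto)
  have VW: "V * W0 = 1\<^sub>m k" by (rule mat_mult_left_right_inverse[OF W0c Vc WV])
  have inv: "invertible_mat V"
    unfolding invertible_mat_def inverts_mat_def
    using VW WV Vc W0c by auto
  have rowbound: "(\<Sum>r<k. cmod (W0 $$ (i, r)))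
      \<le> pi ^ (k - 1) / (real (zeta_fact k) * tm ^ (k - 1))" if i: "i < k" for i
  proof -
    have "(\<Sum>r<k. cmod (W0 $$ (i, r))) = l1 k (L i)"
      using i by (simp add: W0_def l1_def)
    also have "\<dots> = cmod (inverse (D i)) * l1 k (P i)" by (simp add: L_def l1_smult)
    also have "\<dots> \<le> cmod (inverse (D i)) * (\<Prod>l\<in>S i. (1 + cmod (z l)))"
      unfolding P_def by (intro mult_left_mono l1_prod_lin finS) auto
    also have "\<dots> = (\<Prod>l\<in>S i. (2::real)) / (\<Prod>l\<in>S i. cmod (z i - z l))"
      by (simp add: zabs D_def norm_inverse prod_norm[symmetric] divide_inverse mult.commute)
    also have "\<dots> = (\<Prod>l\<in>S i. (2 / cmod (z i - z l)))"
      by (rule prod_dividef[symmetric])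
    also have "\<dots> \<le> (\<Prod>l\<in>S i. (pi / (real (dd i l) * tm)))"
    proof (rule prod_mono)
      fix l assume l: "l \<in> S i"
      then have lk: "l < k" and li: "i \<noteq> l" by (auto simp: S_def)
      have w: "0 < 2 * (real (dd i l) * tm) / pi" using dd_pos[OF li] tm_pos by simp
      have "2 / cmod (z i - z l) \<le> 2 / (2 * (real (dd i l) * tm) / pi)"
        by (rule frac_le) (use w chord[OF i lk] in auto)
      also have "\<dots> = pi / (real (dd i l) * tm)" by simp
      finally show "0 \<le> 2 / cmod (z i - z l) \<and> 2 / cmod (z i - z l) \<le> pi / (real (dd i l) * tm)"
        by simp
    qed
    also have "\<dots> = pi ^ (k - 1) / (tm ^ (k - 1) * real (\<Prod>l\<in>S i. dd i l))"
      by (simp add: prod_dividef prod.distrib cardS[OF i] mult.commute)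
    also have "(\<Prod>l\<in>S i. dd i l) = fact i * fact (k - 1 - i)"
    proof -
      have Su: "S i = {..<i} \<union> {i<..<k}" using i by (auto simp: S_def)
      have "(\<Prod>l\<in>S i. dd i l) = (\<Prod>l\<in>{..<i}. dd i l) * (\<Prod>l\<in>{i<..<k}. dd i l)"
        unfolding Su by (rule prod.union_disjoint) auto
      also have "(\<Prod>l\<in>{..<i}. dd i l) = (\<Prod>l<i. (i - l))"
        by (rule prod.cong) (auto simp: dd_def)
      also have "(\<Prod>l\<in>{i<..<k}. dd i l) = (\<Prod>l\<in>{i<..<k}. (l - i))"
        by (rule prod.cong) (auto simp: dd_def)
      finally show ?thesis by (simp add: prod_down prod_up)
    qed
    also have "pi ^ (k - 1) / (tm ^ (k - 1) * real (fact i * fact (k - 1 - i)))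
        \<le> pi ^ (k - 1) / (real (zeta_fact k) * tm ^ (k - 1))"
    proof -
      have "zeta_fact k \<le> fact i * fact (k - 1 - i)"
        unfolding zeta_fact_eq[OF assms(1)] by (rule fact_balance) (use i in simp)
      then have "real (zeta_fact k) \<le> real (fact i * fact (k - 1 - i))" by linarith
      moreover have "0 < real (zeta_fact k)"
        by (simp add: zeta_fact_def)
      ultimately show ?thesis using tm_pos
        by (intro divide_left_mono) (auto simp: mult.commute intro!: mult_right_mono)
    qed
    finally show ?thesis .
  qed
  have normW0: "mat_inf_norm W0 \<le> pi ^ (k - 1) / (real (zeta_fact k) * tm ^ (k - 1))"
    unfolding mat_inf_norm_def
  proof (subst Max_le_iff)
    have "{\<Sum>j<dim_col W0. cmod (W0 $$ (i, j)) |i. i < dim_row W0}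
        = (\<lambda>i. \<Sum>j<k. cmod (W0 $$ (i, j))) ` {..<k}" using W0c by auto
    then show "finite {\<Sum>j<dim_col W0. cmod (W0 $$ (i, j)) |i. i < dim_row W0}"
      and "{\<Sum>j<dim_col W0. cmod (W0 $$ (i, j)) |i. i < dim_row W0} \<noteq> {}"
      using assms(1) by (auto simp: lessThan_empty_iff)
    show "\<forall>a\<in>{\<Sum>j<dim_col W0. cmod (W0 $$ (i, j)) |i. i < dim_row W0}.
        a \<le> pi ^ (k - 1) / (real (zeta_fact k) * tm ^ (k - 1))"
      using rowbound W0c by auto
  qed
  show ?thesis
    unfolding V_def[symmetric] tm_def[symmetric]
  proof (intro conjI ballI impI inv)
    fix W assume Wc: "W \<in> carrier_mat k k" and WVe: "W * V = 1\<^sub>m k"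
    have "W = W * (V * W0)" using Wc by (simp add: VW)
    also have "\<dots> = (W * V) * W0" using Wc Vc W0c by (simp add: assoc_mult_mat)
    also have "\<dots> = W0" using W0c by (simp add: WVe)
    finally show "mat_inf_norm W \<le> pi ^ (k - 1) / (real (zeta_fact k) * tm ^ (k - 1))"
      using normW0 by simp
  qed
qed

end
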